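(* Let $R$ be an integral domain of characteristic zero and let $n$ be a positive integer. If $d_1,\dots,d_n$ are nonzero derivations on $R$, then $d_1\circ\cdots\circ d_n\in\mathcal{D}^n(R)\setminus\mathcal{D}^{n-1}(R)$, i.e. it is a derivation of order exactly $n$.
   Context: All rings are commutative with unit. A derivation on $R$ is a map $d\colon R\to R$ with $d(x+y)=d(x)+d(y)$ and $d(xy)=d(x)y+d(y)x$. Inductively: $\mathcal{D}^{-1}(R)=\emptyset$, $\mathcal{D}^0(R)=\{0\}$; for $n>0$, $D\in\mathcal{D}^n(R)$ (derivation of order at most $n$) if $D$ is additive and $D(xy)-D(x)y-D(y)x=B(x,y)$ for all $x,y\in R$, where for each fixed value of one variable, $B$ is a member of $\mathcal{D}^{n-1}(R)$ in the other variable. *)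

theory Defs
  imports Main
begin

definition is_derivation :: "('a::comm_ring_1 \<Rightarrow> 'a) \<Rightarrow> bool" where
  "is_derivation d \<longleftrightarrow> (\<forall>x y. d (x + y) = d x + d y) \<and>
                          (\<forall>x y. d (x * y) = d x * y + d y * x)"

text \<open>derivs n = the set D^n(R) of derivations of order at most n (n \<ge> 0);
  D^{-1} = {} is not needed since D^0 = {0} is the base case.\<close>
fun derivs :: "nat \<Rightarrow> ('a::comm_ring_1 \<Rightarrow> 'a) set" where
  "derivs 0 = {\<lambda>x. 0}"
| "derivs (Suc n) = {D. (\<forall>x y. D (x + y) = D x + D y) \<and>
     (\<forall>x. (\<lambda>y. D (x * y) - D x * y - D y * x) \<in> derivs n) \<and>
     (\<forall>y. (\<lambda>x. D (x * y) - D x * y - D y * x) \<in> derivs n)}"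

end

theory Submission
  imports Defs
begin

definition pol :: "('a::comm_ring_1 \<Rightarrow> 'a) \<Rightarrow> 'a \<Rightarrow> 'a \<Rightarrow> 'a" where
  "pol D x = (\<lambda>y. D (x * y) - D x * y - D y * x)"

lemma derivs_Suc_iff:
  "D \<in> derivs (Suc n) \<longleftrightarrow> (\<forall>x y. D (x + y) = D x + D y) \<and> (\<forall>x. pol D x \<in> derivs n)"
proof -
  have "\<And>y. (\<lambda>x. D (x * y) - D x * y - D y * x) = pol D y"
    by (rule ext) (simp add: pol_def mult.commute algebra_simps)
  then show ?thesis by (simp add: pol_def)
qed

declare derivs.simps(2)[simp del]

lemma derivs_zero: "(\<lambda>_. 0) \<in> derivs k"
  by (induction k) (auto simp: derivs_Suc_iff pol_def)

lemma derivs_add: "D1 \<in> derivs k \<Longrightarrow> D2 \<in> derivs k \<Longrightarrow> (\<lambda>y. D1 y + D2 y) \<in> derivs k"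
proof (induction k arbitrary: D1 D2)
  case 0 then show ?case by simp
next
  case (Suc k)
  have "pol (\<lambda>y. D1 y + D2 y) x = (\<lambda>y. pol D1 x y + pol D2 x y)" for x
    by (rule ext) (simp add: pol_def algebra_simps)
  with Suc show ?case by (simp add: derivs_Suc_iff distrib_left)
qed

lemma derivs_smult: "D \<in> derivs k \<Longrightarrow> (\<lambda>y. c * D y) \<in> derivs k"
proof (induction k arbitrary: D)
  case 0 then show ?case by simp
next
  case (Suc k)
  have "pol (\<lambda>y. c * D y) x = (\<lambda>y. c * pol D x y)" for x
    by (rule ext) (simp add: pol_def algebra_simps)
  with Suc show ?case by (simp add: derivs_Suc_iff distrib_left)
qed

lemma derivs_mono: "D \<in> derivs k \<Longrightarrow> D \<in> derivs (Suc k)"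
proof (induction k arbitrary: D)
  case 0 then show ?case using derivs_zero[of "Suc 0"] by simp
next
  case (Suc k)
  then show ?case by (auto simp: derivs_Suc_iff)
qed

lemma deriv_zero: "is_derivation d \<Longrightarrow> d 0 = 0"
proof -
  assume "is_derivation d"
  then have "d (0 + 0) = d 0 + d 0" unfolding is_derivation_def by blast
  then show ?thesis by simp
qed

lemma deriv_in1: "is_derivation d \<Longrightarrow> d \<in> derivs 1"
proof -
  assume d: "is_derivation d"
  have "pol d x = (\<lambda>_. 0)" for x
    using d by (auto simp: pol_def is_derivation_def)
  with d show ?thesis by (auto simp: derivs_Suc_iff is_derivation_def)
qed

lemma derivs_ge: assumes "D \<in> derivs 1" "1 \<le> k" shows "D \<in> derivs k"
  using assms(2)
proof (induction k rule: dec_induct)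
  case base then show ?case using assms(1) by simp
next
  case (step k) then show ?case by (simp add: derivs_mono)
qed

lemma deriv_mult: "is_derivation d \<Longrightarrow> d (a * b) = d a * b + d b * a"
  by (simp add: is_derivation_def)
lemma deriv_add: "is_derivation d \<Longrightarrow> d (a + b) = d a + d b"
  by (simp add: is_derivation_def)

lemma pol_comp:
  assumes d: "is_derivation d"
  shows "pol (d \<circ> F) x = (\<lambda>y. F x * d y + d x * F y + d (pol F x y))"
proof (rule ext)
  fix y
  have e: "F (x * y) = F x * y + F y * x + pol F x y" by (simp add: pol_def)
  have "d (F (x * y)) = d (F x) * y + F x * d y + (d (F y) * x + F y * d x) + d (pol F x y)"
    unfolding e using d by (simp add: deriv_add deriv_mult algebra_simps)
  then show "pol (d \<circ> F) x y = F x * d y + d x * F y + d (pol F x y)"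
    by (simp add: pol_def algebra_simps)
qed

lemma derivs_comp:
  assumes d: "is_derivation d"
  shows "D \<in> derivs k \<Longrightarrow> (d \<circ> D) \<in> derivs (Suc k)"
proof (induction k arbitrary: D)
  case 0
  then have "d \<circ> D = (\<lambda>_. 0)" using deriv_zero[OF d] by auto
  then show ?case using derivs_zero by simp
next
  case (Suc k)
  have add: "\<forall>x y. (d \<circ> D) (x + y) = (d \<circ> D) x + (d \<circ> D) y"
    using Suc.prems d by (auto simp: derivs_Suc_iff deriv_add)
  have "pol (d \<circ> D) x \<in> derivs (Suc k)" for x
  proof -
    have d1: "d \<in> derivs (Suc k)" using derivs_ge[OF deriv_in1[OF d]] by simp
    have a: "(\<lambda>y. D x * d y) \<in> derivs (Suc k)" using derivs_smult[OF d1] .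
    have b: "(\<lambda>y. d x * D y) \<in> derivs (Suc k)" using derivs_smult[OF Suc.prems] .
    have "pol D x \<in> derivs k" using Suc.prems by (simp add: derivs_Suc_iff)
    then have c: "(\<lambda>y. d (pol D x y)) \<in> derivs (Suc k)" using Suc.IH by (simp add: comp_def)
    have "(\<lambda>y. D x * d y + d x * D y) \<in> derivs (Suc k)" using derivs_add[OF a b] by simp
    from derivs_add[OF this c] show ?thesis by (simp add: pol_comp[OF d])
  qed
  with add show ?case by (intro derivs_Suc_iff[THEN iffD2]) blast
qed

lemma foldr_comp_Cons: "foldr (\<circ>) (d # ds) id = d \<circ> foldr (\<circ>) ds id"
  by simp

lemma foldr_derivs:
  "\<forall>d\<in>set ds. is_derivation d \<Longrightarrow> ds \<noteq> [] \<Longrightarrow> foldr (\<circ>) ds id \<in> derivs (length ds)"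
proof (induction ds)
  case Nil then show ?case by simp
next
  case (Cons d ds)
  show ?case
  proof (cases "ds = []")
    case True then show ?thesis using deriv_in1 Cons.prems by simp
  next
    case False
    have "\<forall>d\<in>set ds. is_derivation d" using Cons.prems by simp
    then have "foldr (\<circ>) ds id \<in> derivs (length ds)" using Cons.IH False by blast
    moreover have "is_derivation d" using Cons.prems by simp
    ultimately have "d \<circ> foldr (\<circ>) ds id \<in> derivs (Suc (length ds))" using derivs_comp by blast
    then show ?thesis unfolding foldr_comp_Cons length_Cons .
  qed
qed

fun tpol :: "'a::comm_ring_1 \<Rightarrow> nat \<Rightarrow> ('a \<Rightarrow> 'a) \<Rightarrow> ('a \<Rightarrow> 'a)" where
  "tpol x 0 D = D"
| "tpol x (Suc j) D = pol (tpol x j D) x"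

lemma tpol_Suc': "tpol x (Suc j) D = tpol x j (pol D x)"
  by (induction j) auto

lemma tpol_derivs: "D \<in> derivs m \<Longrightarrow> tpol x m D = (\<lambda>_. 0)"
proof (induction m arbitrary: D)
  case 0 then show ?case by simp
next
  case (Suc m)
  then show ?case by (simp only: tpol_Suc') (auto simp: derivs_Suc_iff)
qed

lemma pol_combo:
  assumes d: "is_derivation d"
  shows "pol (\<lambda>y. c1 * d y + c2 * G y + d (H y)) x
       = (\<lambda>y. c2 * pol G x y + H x * d y + d x * H y + d (pol H x y))"
proof (rule ext)
  fix y
  have e: "H (x * y) = H x * y + H y * x + pol H x y" by (simp add: pol_def)
  have "d (H (x * y)) = d (H x) * y + H x * d y + (d (H y) * x + H y * d x) + d (pol H x y)"
    unfolding e using d by (simp add: deriv_add deriv_mult algebra_simps)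
  moreover have "d (x * y) = d x * y + d y * x" using d by (simp add: deriv_mult)
  moreover have "d (H x * y) = d (H x) * y + d y * H x" using d by (simp add: deriv_mult)
  ultimately show "pol (\<lambda>y. c1 * d y + c2 * G y + d (H y)) x y
       = c2 * pol G x y + H x * d y + d x * H y + d (pol H x y)"
    by (simp add: pol_def algebra_simps)
qed

lemma tpol_comp:
  assumes d: "is_derivation d"
  shows "tpol x (Suc j) (d \<circ> F) = (\<lambda>y. tpol x j F x * d y
     + of_nat (Suc j) * d x * tpol x j F y + d (tpol x (Suc j) F y))"
proof (induction j)
  case 0 then show ?case by (simp only: tpol.simps pol_comp[OF d]) simp
next
  case (Suc j)
  have "tpol x (Suc (Suc j)) (d \<circ> F) = pol (tpol x (Suc j) (d \<circ> F)) x" by simp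
  also have "\<dots> = (\<lambda>y. of_nat (Suc j) * d x * pol (tpol x j F) x y + tpol x (Suc j) F x * d y
        + d x * tpol x (Suc j) F y + d (pol (tpol x (Suc j) F) x y))"
    unfolding Suc.IH by (rule pol_combo[OF d])
  also have "\<dots> = (\<lambda>y. tpol x (Suc j) F x * d y
     + of_nat (Suc (Suc j)) * d x * tpol x (Suc j) F y + d (tpol x (Suc (Suc j)) F y))"
    by (rule ext) (simp only: tpol.simps[symmetric], simp add: algebra_simps)
  finally show ?case .
qed

lemma tpol_nonzero:
  fixes x :: "'a::{idom, ring_char_0}"
  shows "\<forall>d\<in>set ds. is_derivation d \<and> d x \<noteq> 0 \<Longrightarrow> ds \<noteq> []
    \<Longrightarrow> tpol x (length ds - 1) (foldr (\<circ>) ds id) x \<noteq> 0"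
proof (induction ds)
  case Nil then show ?case by simp
next
  case (Cons d ds)
  show ?case
  proof (cases "ds = []")
    case True then show ?thesis using Cons.prems by simp
  next
    case False
    then obtain m where m: "length ds = Suc m" by (cases ds) auto
    let ?F = "foldr (\<circ>) ds id"
    have dd: "is_derivation d" "d x \<noteq> 0" using Cons.prems by auto
    have "?F \<in> derivs (Suc m)" using foldr_derivs[of ds] Cons.prems False m by auto
    then have z: "tpol x (Suc m) ?F = (\<lambda>_. 0)" by (rule tpol_derivs)
    have "\<forall>d\<in>set ds. is_derivation d \<and> d x \<noteq> 0" using Cons.prems by simp
    then have "tpol x (length ds - 1) ?F x \<noteq> 0" using Cons.IH False by blast
    then have c: "tpol x m ?F x \<noteq> 0" using m by simp
    have "tpol x (Suc m) (d \<circ> ?F) x = of_nat (Suc (Suc m)) * d x * tpol x m ?F x"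
      unfolding tpol_comp[OF dd(1)] z using deriv_zero[OF dd(1)] by (simp add: algebra_simps)
    moreover have "of_nat (Suc (Suc m)) * d x * tpol x m ?F x \<noteq> 0"
      using c dd(2) by (simp del: of_nat_Suc)
    ultimately have "tpol x (Suc m) (d \<circ> ?F) x \<noteq> 0" by metis
    then show ?thesis unfolding foldr_comp_Cons length_Cons diff_Suc_1 m .
  qed
qed

lemma deriv_of_nat: "is_derivation d \<Longrightarrow> d (of_nat t) = 0"
proof (induction t)
  case 0 then show ?case using deriv_zero by simp
next
  case (Suc t)
  have "d (1 * 1) = d 1 * 1 + d 1 * 1" using Suc.prems by (rule deriv_mult)
  then have "d 1 = 0" by simp
  then show ?case using Suc deriv_add[OF Suc.prems] by simp
qed

lemma common_point:
  fixes d :: "nat \<Rightarrow> ('a::{idom, ring_char_0} \<Rightarrow> 'a)"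
  shows "(\<And>i. i < n \<Longrightarrow> is_derivation (d i)) \<Longrightarrow> (\<And>i. i < n \<Longrightarrow> d i \<noteq> (\<lambda>x. 0))
    \<Longrightarrow> \<exists>x. \<forall>i<n. d i x \<noteq> 0"
proof (induction n)
  case 0 then show ?case by simp
next
  case (Suc n)
  then obtain x where x: "\<forall>i<n. d i x \<noteq> 0" by auto
  show ?case
  proof (cases "d n x = 0")
    case False then show ?thesis using x less_Suc_eq by (metis)
  next
    case True
    obtain a where a: "d n a \<noteq> 0" using Suc.prems(2)[of n] by auto
    define bad where "bad = (\<Union>i<n. {t::nat. d i x + of_nat t * d i a = 0})"
    have "finite {t::nat. d i x + of_nat t * d i a = 0}" if i: "i < n" for i
      proof (cases "\<exists>t. d i x + of_nat t * d i a = 0")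
        case False then show ?thesis by simp
      next
        case True
        then obtain t0 where t0: "d i x + of_nat t0 * d i a = 0" by auto
        have "{t::nat. d i x + of_nat t * d i a = 0} \<subseteq> {t0}"
        proof
          fix t assume "t \<in> {t::nat. d i x + of_nat t * d i a = 0}"
          then have "d i x + of_nat t * d i a = 0" by simp
          with t0 have "of_nat t * d i a = of_nat t0 * d i a" by (metis add_left_cancel)
          moreover have "d i a \<noteq> 0" using t0 x i by auto
          ultimately have "(of_nat t :: 'a) = of_nat t0" by simp
          then show "t \<in> {t0}" by simp
        qed
        then show ?thesis using finite_subset by blast
      qed
    then have "finite (insert 0 bad)" unfolding bad_def by auto
    then obtain t where t: "t \<notin> insert 0 bad" using infinite_UNIV_nat
      by (metis ex_new_if_finite)
    define y where "y = x + of_nat t * a"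
    have dy: "d i y = d i x + of_nat t * d i a" if "i < Suc n" for i
    proof -
      have di: "is_derivation (d i)" using Suc.prems(1) that by simp
      show ?thesis unfolding y_def using deriv_add[OF di] deriv_mult[OF di] deriv_of_nat[OF di]
        by (simp add: mult.commute)
    qed
    have "\<forall>i<Suc n. d i y \<noteq> 0"
    proof (intro allI impI)
      fix i assume i: "i < Suc n"
      show "d i y \<noteq> 0"
      proof (cases "i = n")
        case True then show ?thesis using dy[OF i] \<open>d n x = 0\<close> a t by simp
      next
        case False then have "i < n" using i by simp
        then show ?thesis using dy[OF i] t unfolding bad_def by auto
      qed
    qed
    then show ?thesis by blast
  qed
qed

theorem theorem1p2:
  fixes d :: "nat \<Rightarrow> ('a::{idom, ring_char_0} \<Rightarrow> 'a)" and n :: nat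
  assumes "n \<ge> 1"
    and "\<And>i. i < n \<Longrightarrow> is_derivation (d i)"
    and "\<And>i. i < n \<Longrightarrow> d i \<noteq> (\<lambda>x. 0)"
  shows "foldr (\<circ>) (map d [0..<n]) id \<in> derivs n
       \<and> foldr (\<circ>) (map d [0..<n]) id \<notin> derivs (n - 1)"
proof -
  let ?ds = "map d [0..<n]"
  have ne: "?ds \<noteq> []" using assms(1) by simp
  have der: "\<forall>e\<in>set ?ds. is_derivation e" using assms(2) by auto
  have A: "foldr (\<circ>) ?ds id \<in> derivs n" using foldr_derivs[OF der ne] by simp
  obtain x where x: "\<forall>i<n. d i x \<noteq> 0" using common_point[of n d] assms(2,3) by blast
  have "\<forall>e\<in>set ?ds. is_derivation e \<and> e x \<noteq> 0" using assms(2) x by auto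
  from tpol_nonzero[OF this ne]
  have nz: "tpol x (n - 1) (foldr (\<circ>) ?ds id) x \<noteq> 0" by simp
  have "foldr (\<circ>) ?ds id \<notin> derivs (n - 1)"
  proof
    assume "foldr (\<circ>) ?ds id \<in> derivs (n - 1)"
    from tpol_derivs[OF this, of x] nz show False by simp
  qed
  with A show ?thesis by simp
qed

end
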